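(* Let $K$ be an $(\mathbb{F}_q,\mathbb{Z})$-field, $\mathcal{L}$ a language expanding $(D^{(2)},\{R_{n,m}\}_{n,m})$, and $\Delta$ a collection of functions order-definable in $\mathcal{L}$. Let $$C=\{(x,t)\in D\times K:\mathrm{ord}\,a_1(x)\ \square_1\ \mathrm{ord}(t-c(x))\ \square_2\ \mathrm{ord}\,a_2(x),\ t-c(x)\in\lambda Q_{n,m}\}\subseteq K^{k+1}$$ be an $(\mathcal{L},\Delta)$-cell. Suppose that for every $l\in\mathbb{N}$ the set $\{x\in K^k:\mathrm{ord}\,a_1(x)\equiv l\bmod n\}$ can be partitioned as a finite union of $(\mathcal{L},\Delta)$-precells. Then the projection $P=\{x\in K^k:\exists t\,(x,t)\in C\}$ can be partitioned into finitely many $(\mathcal{L},\Delta)$-precells.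
   Context: Let $K$ be an $(\mathbb{F}_q,\mathbb{Z})$-field: a valued field with residue field isomorphic to $\mathbb{F}_q$ and value group elementarily equivalent to $\mathbb{Z}$. Notation: $\mathrm{ord}$ is the valuation ($\mathrm{ord}\,0=+\infty$), $\mathcal{O}_K$ the valuation ring, $\mathcal{M}_K$ its maximal ideal, $\pi_K$ an element of smallest positive order; integers $\ell$ added to orders mean $\ell\cdot\mathrm{ord}\,\pi_K$. For $n>0$, $P_n$ is the set of nonzero $n$-th powers. For $m>0$, $\mathrm{ac}_m:K^\times\to(\mathcal{O}_K/\pi_K^m)^\times$ is the unique group homomorphism with $\mathrm{ac}_m(\pi_K)=1$ and $\mathrm{ac}_m(u)\equiv u\bmod \pi_K^m$ for units $u$. Put $Q_{n,m}=\{x\in P_n\cdot(1+\mathcal{M}_K^m):\mathrm{ac}_m(x)=1\}$ and $\lambda Q_{n,m}=\{\lambda t:t\in Q_{n,m}\}$ for $\lambda\in K$ (so $0\cdot Q_{n,m}=\{0\}$). Relations: $R_{n,m}(x,y,z)\Leftrightarrow y-x\in zQ_{n,m}$; $D^{(2)}(x,y)\Leftrightarrow \mathrm{ord}\,x<\mathrm{ord}\,y$. Definable means definable with parameters from $K$. A function $f:K^k\to K$ is order-definable in $\mathcal{L}$ if $\{(x,t):\mathrm{ord}\,f(x)<\mathrm{ord}\,t\}$ is $\mathcal{L}$-definable. Cells: let $\mathcal{L}$ expand $(D^{(2)},\{R_{n,m}\})$ and $\Delta=\bigcup_k\Delta_k$, $\Delta_k$ a set of functions $K^k\to K$. An $(\mathcal{L},\Delta)$-precell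 in $K^k$ is a set $\{x\in K^k:\phi(x)\}$ with $\phi$ a Boolean combination of conditions $\mathrm{ord}\,a_1(x)<\mathrm{ord}\,a_2(x)+\ell$ ($a_i\in\Delta_k$, $\ell\in\mathbb{Z}$) and $b_1(x)-b_2(x)\in\lambda Q_{n,m}$ ($b_i$ quantifier-free $\mathcal{L}$-definable functions, $\lambda\in K$). An $(\mathcal{L},\Delta)$-cell in $K^{k+1}$ is a set $\{(x,t)\in D\times K:\mathrm{ord}\,a_1(x)\ \square_1\ \mathrm{ord}(t-c(x))\ \square_2\ \mathrm{ord}\,a_2(x),\ t-c(x)\in\lambda Q_{n,m}\}$ with $D$ an $(\mathcal{L},\Delta)$-precell in $K^k$, $\lambda\in K$, $n,m>0$, $a_1,a_2\in\Delta_k$, each $\square_i$ either $<$ or "no condition", and center $c:K^k\to K$ quantifier-free $\mathcal{L}$-definable. *)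

theory Defs
  imports Main
begin

text \<open>A valuation is given by v :: 'a => 'g on nonzero elements (the value at 0 is
irrelevant; ord 0 = +infinity is handled explicitly below).\<close>

definition valuation :: "('a::field \<Rightarrow> 'g::linordered_ab_group_add) \<Rightarrow> bool" where
  "valuation v \<longleftrightarrow>
     (\<forall>x y. x \<noteq> 0 \<longrightarrow> y \<noteq> 0 \<longrightarrow> v (x * y) = v x + v y) \<and>
     (\<forall>x y. x \<noteq> 0 \<longrightarrow> y \<noteq> 0 \<longrightarrow> x + y \<noteq> 0 \<longrightarrow> min (v x) (v y) \<le> v (x + y)) \<and>
     (\<forall>\<gamma>. \<exists>x. x \<noteq> 0 \<and> v x = \<gamma>)"

definition val_ring :: "('a::field \<Rightarrow> 'g::linordered_ab_group_add) \<Rightarrow> 'a set" where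
  "val_ring v = {x. x = 0 \<or> 0 \<le> v x}"

definition max_ideal :: "('a::field \<Rightarrow> 'g::linordered_ab_group_add) \<Rightarrow> 'a set" where
  "max_ideal v = {x. x = 0 \<or> 0 < v x}"

definition max_ideal_pow :: "('a::field \<Rightarrow> 'g::linordered_ab_group_add) \<Rightarrow> 'a \<Rightarrow> nat \<Rightarrow> 'a set" where
  "max_ideal_pow v \<pi> m = {x. x = 0 \<or> v (\<pi> ^ m) \<le> v x}"

definition residue_field :: "('a::field \<Rightarrow> 'g::linordered_ab_group_add) \<Rightarrow> 'a set set" where
  "residue_field v = (\<lambda>x. {y \<in> val_ring v. x - y \<in> max_ideal v}) ` val_ring v"

definition uniformizer :: "('a::field \<Rightarrow> 'g::linordered_ab_group_add) \<Rightarrow> 'a \<Rightarrow> bool" where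
  "uniformizer v \<pi> \<longleftrightarrow> \<pi> \<noteq> 0 \<and> 0 < v \<pi> \<and> (\<forall>x. x \<noteq> 0 \<longrightarrow> 0 < v x \<longrightarrow> v \<pi> \<le> v x)"

text \<open>(F_q,Z)-field: residue field has exactly q elements (hence is isomorphic to F_q),
 value group is a Z-group (discretely ordered abelian group with least positive
 element v pi such that every element is congruent modulo n to r * v pi, 0 <= r < n;
 these are exactly the ordered abelian groups elementarily equivalent to Z).\<close>
definition FqZ_field :: "nat \<Rightarrow> ('a::field \<Rightarrow> 'g::linordered_ab_group_add) \<Rightarrow> 'a \<Rightarrow> bool" where
  "FqZ_field q v \<pi> \<longleftrightarrow>
     valuation v \<and> uniformizer v \<pi> \<and>
     finite (residue_field v) \<and> card (residue_field v) = q \<and>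
     (\<forall>n::nat. 0 < n \<longrightarrow> (\<forall>x. x \<noteq> 0 \<longrightarrow>
        (\<exists>r<n. \<exists>y. y \<noteq> 0 \<and> v x = v (\<pi> ^ r * y ^ n))))"

text \<open>ord x < ord y, with ord 0 = +infinity.\<close>
definition ord_less :: "('a::field \<Rightarrow> 'g::linordered_ab_group_add) \<Rightarrow> 'a \<Rightarrow> 'a \<Rightarrow> bool" where
  "ord_less v x y \<longleftrightarrow> x \<noteq> 0 \<and> (y = 0 \<or> v x < v y)"

definition cong_pi :: "('a::field \<Rightarrow> 'g::linordered_ab_group_add) \<Rightarrow> 'a \<Rightarrow> nat \<Rightarrow> 'a \<Rightarrow> 'a \<Rightarrow> bool" where
  "cong_pi v \<pi> m x y \<longleftrightarrow> x - y \<in> max_ideal_pow v \<pi> m"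

text \<open>ac is a group homomorphism K^x -> (O/pi^m)^x, represented by unit
representatives modulo pi^m, with ac(pi) = 1 and ac(u) = u mod pi^m for units u.\<close>
definition ac_spec :: "('a::field \<Rightarrow> 'g::linordered_ab_group_add) \<Rightarrow> 'a \<Rightarrow> nat \<Rightarrow> ('a \<Rightarrow> 'a) \<Rightarrow> bool" where
  "ac_spec v \<pi> m ac \<longleftrightarrow>
     (\<forall>x. x \<noteq> 0 \<longrightarrow> ac x \<noteq> 0 \<and> v (ac x) = 0) \<and>
     (\<forall>x y. x \<noteq> 0 \<longrightarrow> y \<noteq> 0 \<longrightarrow> cong_pi v \<pi> m (ac (x * y)) (ac x * ac y)) \<and>
     cong_pi v \<pi> m (ac \<pi>) 1 \<and>
     (\<forall>u. u \<noteq> 0 \<longrightarrow> v u = 0 \<longrightarrow> cong_pi v \<pi> m (ac u) u)"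

definition ac :: "('a::field \<Rightarrow> 'g::linordered_ab_group_add) \<Rightarrow> 'a \<Rightarrow> nat \<Rightarrow> 'a \<Rightarrow> 'a" where
  "ac v \<pi> m = (SOME f. ac_spec v \<pi> m f)"

definition Q_set :: "('a::field \<Rightarrow> 'g::linordered_ab_group_add) \<Rightarrow> 'a \<Rightarrow> nat \<Rightarrow> nat \<Rightarrow> 'a set" where
  "Q_set v \<pi> n m = {x. x \<noteq> 0 \<and>
      (\<exists>y z. y \<noteq> 0 \<and> z \<in> max_ideal_pow v \<pi> m \<and> x = y ^ n * (1 + z)) \<and>
      cong_pi v \<pi> m (ac v \<pi> m x) 1}"

definition lamQ :: "('a::field \<Rightarrow> 'g::linordered_ab_group_add) \<Rightarrow> 'a \<Rightarrow> 'a \<Rightarrow> nat \<Rightarrow> nat \<Rightarrow> 'a set" where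
  "lamQ v \<pi> lam n m = (\<lambda>t. lam * t) ` Q_set v \<pi> n m"

definition D2_rel :: "('a::field \<Rightarrow> 'g::linordered_ab_group_add) \<Rightarrow> 'a list \<Rightarrow> bool" where
  "D2_rel v xs \<longleftrightarrow> length xs = 2 \<and> ord_less v (xs ! 0) (xs ! 1)"

definition R_rel :: "('a::field \<Rightarrow> 'g::linordered_ab_group_add) \<Rightarrow> 'a \<Rightarrow> nat \<Rightarrow> nat \<Rightarrow> 'a list \<Rightarrow> bool" where
  "R_rel v \<pi> n m xs \<longleftrightarrow> length xs = 3 \<and> xs ! 1 - xs ! 0 \<in> lamQ v \<pi> (xs ! 2) n m"

text \<open>A language on K is given by a set of basic relations Rels and a set of basic
functions Funs (interpreted directly as functions on tuples).\<close>

datatype (dead 'a) tm = Var nat | Par 'a | Fn "'a list \<Rightarrow> 'a" "'a tm list"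

datatype (dead 'a) fm = Eq "'a tm" "'a tm" | Rl "'a list \<Rightarrow> bool" "'a tm list"
  | Neg "'a fm" | Conj "'a fm" "'a fm" | Ex nat "'a fm"

fun evt :: "(nat \<Rightarrow> 'a) \<Rightarrow> 'a tm \<Rightarrow> 'a" where
  "evt e (Var i) = e i"
| "evt e (Par a) = a"
| "evt e (Fn f ts) = f (map (evt e) ts)"

fun sat :: "(nat \<Rightarrow> 'a) \<Rightarrow> 'a fm \<Rightarrow> bool" where
  "sat e (Eq s t) = (evt e s = evt e t)"
| "sat e (Rl R ts) = R (map (evt e) ts)"
| "sat e (Neg \<phi>) = (\<not> sat e \<phi>)"
| "sat e (Conj \<phi> \<psi>) = (sat e \<phi> \<and> sat e \<psi>)"
| "sat e (Ex i \<phi>) = (\<exists>a. sat (e(i := a)) \<phi>)"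

fun tm_in :: "('a list \<Rightarrow> 'a) set \<Rightarrow> 'a tm \<Rightarrow> bool" where
  "tm_in Fs (Var i) = True"
| "tm_in Fs (Par a) = True"
| "tm_in Fs (Fn f ts) = (f \<in> Fs \<and> (\<forall>t\<in>set ts. tm_in Fs t))"

fun fm_in :: "('a list \<Rightarrow> bool) set \<Rightarrow> ('a list \<Rightarrow> 'a) set \<Rightarrow> 'a fm \<Rightarrow> bool" where
  "fm_in Rs Fs (Eq s t) = (tm_in Fs s \<and> tm_in Fs t)"
| "fm_in Rs Fs (Rl R ts) = (R \<in> Rs \<and> (\<forall>t\<in>set ts. tm_in Fs t))"
| "fm_in Rs Fs (Neg \<phi>) = fm_in Rs Fs \<phi>"
| "fm_in Rs Fs (Conj \<phi> \<psi>) = (fm_in Rs Fs \<phi> \<and> fm_in Rs Fs \<psi>)"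
| "fm_in Rs Fs (Ex i \<phi>) = fm_in Rs Fs \<phi>"

fun qfree :: "'a fm \<Rightarrow> bool" where
  "qfree (Eq s t) = True"
| "qfree (Rl R ts) = True"
| "qfree (Neg \<phi>) = qfree \<phi>"
| "qfree (Conj \<phi> \<psi>) = (qfree \<phi> \<and> qfree \<psi>)"
| "qfree (Ex i \<phi>) = False"

text \<open>Variable i is the i-th coordinate of the tuple; other variables are set to 0
(which is harmless since parameters are allowed).\<close>
definition env :: "'a::zero list \<Rightarrow> nat \<Rightarrow> 'a" where
  "env xs i = (if i < length xs then xs ! i else 0)"

text \<open>Subsets of K^k are represented as sets of lists of length k.\<close>
definition definable :: "('a::zero list \<Rightarrow> bool) set \<Rightarrow> ('a list \<Rightarrow> 'a) set \<Rightarrow> nat \<Rightarrow> 'a list set \<Rightarrow> bool" where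
  "definable Rs Fs k S \<longleftrightarrow>
     (\<exists>\<phi>. fm_in Rs Fs \<phi> \<and> S = {xs. length xs = k \<and> sat (env xs) \<phi>})"

definition qf_definable :: "('a::zero list \<Rightarrow> bool) set \<Rightarrow> ('a list \<Rightarrow> 'a) set \<Rightarrow> nat \<Rightarrow> 'a list set \<Rightarrow> bool" where
  "qf_definable Rs Fs k S \<longleftrightarrow>
     (\<exists>\<phi>. fm_in Rs Fs \<phi> \<and> qfree \<phi> \<and> S = {xs. length xs = k \<and> sat (env xs) \<phi>})"

definition qf_def_fun :: "('a::zero list \<Rightarrow> bool) set \<Rightarrow> ('a list \<Rightarrow> 'a) set \<Rightarrow> nat \<Rightarrow> ('a list \<Rightarrow> 'a) \<Rightarrow> bool" where
  "qf_def_fun Rs Fs k f \<longleftrightarrow> qf_definable Rs Fs (Suc k) {xs @ [f xs] | xs. length xs = k}"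

definition order_definable :: "('a::field \<Rightarrow> 'g::linordered_ab_group_add) \<Rightarrow> ('a list \<Rightarrow> bool) set \<Rightarrow> ('a list \<Rightarrow> 'a) set \<Rightarrow> nat \<Rightarrow> ('a list \<Rightarrow> 'a) \<Rightarrow> bool" where
  "order_definable v Rs Fs k f \<longleftrightarrow>
     definable Rs Fs (Suc k) {xs @ [t] | xs t. length xs = k \<and> ord_less v (f xs) t}"

definition expands_base :: "('a::field \<Rightarrow> 'g::linordered_ab_group_add) \<Rightarrow> 'a \<Rightarrow> ('a list \<Rightarrow> bool) set \<Rightarrow> bool" where
  "expands_base v \<pi> Rs \<longleftrightarrow> D2_rel v \<in> Rs \<and> (\<forall>n m. 0 < n \<longrightarrow> 0 < m \<longrightarrow> R_rel v \<pi> n m \<in> Rs)"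

inductive_set bool_comb :: "'b set \<Rightarrow> 'b set set \<Rightarrow> 'b set set" for U A where
  atom: "S \<in> A \<Longrightarrow> S \<in> bool_comb U A"
| top: "U \<in> bool_comb U A"
| compl: "S \<in> bool_comb U A \<Longrightarrow> U - S \<in> bool_comb U A"
| inter: "S \<in> bool_comb U A \<Longrightarrow> T \<in> bool_comb U A \<Longrightarrow> S \<inter> T \<in> bool_comb U A"

definition precell_atoms ::
  "('a::field \<Rightarrow> 'g::linordered_ab_group_add) \<Rightarrow> 'a \<Rightarrow> ('a list \<Rightarrow> bool) set \<Rightarrow> ('a list \<Rightarrow> 'a) set
   \<Rightarrow> (nat \<Rightarrow> ('a list \<Rightarrow> 'a) set) \<Rightarrow> nat \<Rightarrow> 'a list set set" where
  "precell_atoms v \<pi> Rs Fs \<Delta> k =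
     {{x. length x = k \<and> ord_less v (a1 x) (\<pi> powi l * a2 x)} | a1 a2 l.
         a1 \<in> \<Delta> k \<and> a2 \<in> \<Delta> k}
   \<union> {{x. length x = k \<and> b1 x - b2 x \<in> lamQ v \<pi> lam n m} | b1 b2 lam n m.
         qf_def_fun Rs Fs k b1 \<and> qf_def_fun Rs Fs k b2 \<and> 0 < n \<and> 0 < m}"

definition precell ::
  "('a::field \<Rightarrow> 'g::linordered_ab_group_add) \<Rightarrow> 'a \<Rightarrow> ('a list \<Rightarrow> bool) set \<Rightarrow> ('a list \<Rightarrow> 'a) set
   \<Rightarrow> (nat \<Rightarrow> ('a list \<Rightarrow> 'a) set) \<Rightarrow> nat \<Rightarrow> 'a list set \<Rightarrow> bool" where
  "precell v \<pi> Rs Fs \<Delta> k S \<longleftrightarrow> S \<in> bool_comb {x. length x = k} (precell_atoms v \<pi> Rs Fs \<Delta> k)"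

text \<open>The cell with base D, bounds a1, a2 (box_i = True means the condition
 "<" is imposed, False means no condition), center c, coset lambda Q_{n,m}.\<close>
definition cell_set ::
  "('a::field \<Rightarrow> 'g::linordered_ab_group_add) \<Rightarrow> 'a \<Rightarrow> nat \<Rightarrow> 'a list set \<Rightarrow> ('a list \<Rightarrow> 'a)
   \<Rightarrow> bool \<Rightarrow> ('a list \<Rightarrow> 'a) \<Rightarrow> bool \<Rightarrow> ('a list \<Rightarrow> 'a) \<Rightarrow> 'a \<Rightarrow> nat \<Rightarrow> nat \<Rightarrow> 'a list set" where
  "cell_set v \<pi> k D a1 box1 c box2 a2 lam n m =
     {x @ [t] | x t. length x = k \<and> x \<in> D \<and>
        (box1 \<longrightarrow> ord_less v (a1 x) (t - c x)) \<and>
        (box2 \<longrightarrow> ord_less v (t - c x) (a2 x)) \<and>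
        t - c x \<in> lamQ v \<pi> lam n m}"

definition finite_precell_partition ::
  "('a::field \<Rightarrow> 'g::linordered_ab_group_add) \<Rightarrow> 'a \<Rightarrow> ('a list \<Rightarrow> bool) set \<Rightarrow> ('a list \<Rightarrow> 'a) set
   \<Rightarrow> (nat \<Rightarrow> ('a list \<Rightarrow> 'a) set) \<Rightarrow> nat \<Rightarrow> 'a list set \<Rightarrow> bool" where
  "finite_precell_partition v \<pi> Rs Fs \<Delta> k S \<longleftrightarrow>
     (\<exists>Ps. finite Ps \<and> (\<forall>P\<in>Ps. precell v \<pi> Rs Fs \<Delta> k P) \<and> pairwise disjnt Ps \<and> \<Union>Ps = S)"

end

theory Submission
  imports Defs
begin


locale vf =
  fixes v :: "'a::field \<Rightarrow> 'g::linordered_ab_group_add" and \<pi> :: 'a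
  assumes val: "valuation v" and unif: "uniformizer v \<pi>"
begin

lemma vmult[simp]: "x \<noteq> 0 \<Longrightarrow> y \<noteq> 0 \<Longrightarrow> v (x * y) = v x + v y"
  using val unfolding valuation_def by blast

lemma ultra: "x \<noteq> 0 \<Longrightarrow> y \<noteq> 0 \<Longrightarrow> x + y \<noteq> 0 \<Longrightarrow> min (v x) (v y) \<le> v (x + y)"
  using val unfolding valuation_def by blast

lemma vsurj: "\<exists>x. x \<noteq> 0 \<and> v x = g"
  using val unfolding valuation_def by blast

lemma pi_nz[simp]: "\<pi> \<noteq> 0" and vpi_pos: "0 < v \<pi>"
  using unif unfolding uniformizer_def by auto

lemma unif_le: "x \<noteq> 0 \<Longrightarrow> 0 < v x \<Longrightarrow> v \<pi> \<le> v x"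
  using unif unfolding uniformizer_def by auto

lemma v1[simp]: "v 1 = 0"
  using vmult[of 1 1] by simp

lemma vinv[simp]: "x \<noteq> 0 \<Longrightarrow> v (inverse x) = - v x"
  using vmult[of x "inverse x"] by (simp add: eq_neg_iff_add_eq_0 add.commute)

lemma vdiv[simp]: "x \<noteq> 0 \<Longrightarrow> y \<noteq> 0 \<Longrightarrow> v (x / y) = v x - v y"
  by (simp add: divide_inverse)

lemma vm1[simp]: "v (-1) = 0"
proof -
  have "v (-1) + v (-1) = 0" using vmult[of "-1" "-1"] by simp
  then show ?thesis
    by (metis add_neg_neg add_pos_pos less_irrefl linorder_neqE)
qed

lemma vminus[simp]: "v (- x) = v x"
proof (cases "x = 0")
  case False
  then show ?thesis using vmult[of "-1" x] by simp
qed simp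

lemma vpow_Suc: "x \<noteq> 0 \<Longrightarrow> v (x ^ Suc n) = v x + v (x ^ n)"
  by simp

lemma vstrict: assumes "x \<noteq> 0" "y \<noteq> 0" "v x < v y" shows "x + y \<noteq> 0" "v (x + y) = v x"
proof -
  show nz: "x + y \<noteq> 0"
  proof
    assume "x + y = 0" then have "y = - x" by (simp add: eq_neg_iff_add_eq_0 add.commute)
    then show False using assms by simp
  qed
  have ge: "v x \<le> v (x + y)" using ultra[OF assms(1,2) nz] assms(3) by simp
  show "v (x + y) = v x"
  proof (rule ccontr)
    assume "v (x + y) \<noteq> v x"
    with ge have gt: "v x < v (x + y)" by simp
    have "x = (x + y) + (- y)" by simp
    have "min (v (x + y)) (v (-y)) \<le> v ((x + y) + (- y))"
      using ultra[of "x+y" "-y"] nz assms by simp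
    then have "v (x + y) \<le> v x \<or> v y \<le> v x" by (simp add: min_le_iff_disj)
    then show False using gt assms(3) by (metis not_le)
  qed
qed

lemma vpow_pos: "x \<noteq> 0 \<Longrightarrow> 0 < v x \<Longrightarrow> 0 < n \<Longrightarrow> 0 < v (x ^ n)"
proof (induction n)
  case (Suc n) show ?case
  proof (cases n)
    case 0 then show ?thesis using Suc by simp
  next
    case (Suc k) then show ?thesis using Suc.IH Suc.prems vpow_Suc[of x n] by (simp add: add_pos_pos)
  qed
qed simp

lemma vpow_nonneg: "x \<noteq> 0 \<Longrightarrow> 0 \<le> v x \<Longrightarrow> 0 \<le> v (x ^ n)"
  by (induction n) (simp_all add: add_nonneg_nonneg)

lemma vpow_neg: "x \<noteq> 0 \<Longrightarrow> v x < 0 \<Longrightarrow> 0 < n \<Longrightarrow> v (x ^ n) < 0"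
proof (induction n)
  case (Suc n) show ?case
  proof (cases n)
    case 0 then show ?thesis using Suc by simp
  next
    case (Suc k) then show ?thesis using Suc.IH Suc.prems vpow_Suc[of x n] by (simp add: add_neg_neg)
  qed
qed simp

lemma vpow_zero: "x \<noteq> 0 \<Longrightarrow> v x = 0 \<Longrightarrow> v (x ^ n) = 0"
  by (induction n) simp_all

lemma vpow_mono: "x \<noteq> 0 \<Longrightarrow> y \<noteq> 0 \<Longrightarrow> v x \<le> v y \<Longrightarrow> v (x ^ n) \<le> v (y ^ n)"
  by (induction n) (simp_all add: add_mono)

lemma vpow_ge: "x \<noteq> 0 \<Longrightarrow> 0 \<le> v x \<Longrightarrow> 0 < n \<Longrightarrow> v x \<le> v (x ^ n)"
proof -
  assume a: "x \<noteq> 0" "0 \<le> v x" "0 < n"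
  then obtain k where "n = Suc k" by (cases n) auto
  then show ?thesis using a vpow_nonneg[of x k] by simp
qed

lemma vpi_pow_mono: "a < b \<Longrightarrow> v (\<pi> ^ a) < v (\<pi> ^ b)"
proof -
  assume "a < b"
  then have "\<pi> ^ b = \<pi> ^ a * \<pi> ^ (b - a)" by (simp add: power_add[symmetric])
  moreover have "0 < v (\<pi> ^ (b - a))" using vpow_pos[of \<pi> "b-a"] vpi_pos \<open>a < b\<close> by simp
  ultimately show ?thesis by simp
qed

lemma vpi_pow_pos: "0 < d \<Longrightarrow> 0 < v (\<pi> ^ d)"
  using vpow_pos[of \<pi> d] vpi_pos by simp

lemma unif_le_neg: "x \<noteq> 0 \<Longrightarrow> v x < 0 \<Longrightarrow> v x \<le> - v \<pi>"
  using unif_le[of "inverse x"] by (simp add: le_minus_iff)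

lemma key_nodiv: assumes "0 < d" "d < n" "w \<noteq> 0" shows "v (\<pi> ^ d) \<noteq> v (w ^ n)"
proof (cases "0 < v w")
  case True
  then have "v \<pi> \<le> v w" using unif_le assms by simp
  then have "v (\<pi> ^ n) \<le> v (w ^ n)" using vpow_mono assms by simp
  moreover have "v (\<pi> ^ d) < v (\<pi> ^ n)" using vpi_pow_mono assms by simp
  ultimately show ?thesis by simp
next
  case False
  then have "v (w ^ n) \<le> 0"
    using vpow_neg[of w n] vpow_zero[of w n] assms by (cases "v w < 0") (auto simp: not_less)
  moreover have "0 < v (\<pi> ^ d)" using vpi_pow_pos assms by simp
  ultimately show ?thesis by simp
qed

lemma v_unit_pow: assumes "w \<noteq> 0" "v (w ^ n) = 0" "0 < n" shows "v w = 0"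
  using vpow_pos[of w n] vpow_neg[of w n] assms by (metis less_irrefl linorder_neqE)

lemma rep_unique_aux:
  assumes "r' \<le> r" "r < n" "y \<noteq> 0" "y' \<noteq> 0"
    and eq: "v (\<pi> ^ r * y ^ n) = v (\<pi> ^ r' * y' ^ n)"
  shows "r = r' \<and> v y = v y'"
proof -
  have pr: "\<pi> ^ r = \<pi> ^ r' * \<pi> ^ (r - r')" using assms(1) by (simp add: power_add[symmetric])
  have "v (\<pi> ^ r') + v (\<pi> ^ (r - r')) + v (y ^ n) = v (\<pi> ^ r') + v (y' ^ n)"
    using eq assms pr by (simp add: add.assoc)
  then have e2: "v (\<pi> ^ (r - r')) = v ((y' / y) ^ n)"
    using assms by (simp add: power_divide algebra_simps)
  have "r - r' = 0"
  proof (rule ccontr)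
    assume "r - r' \<noteq> 0"
    then have "0 < r - r'" "r - r' < n" using assms by auto
    then show False using key_nodiv[of "r - r'" n "y'/y"] e2 assms by simp
  qed
  then have "r = r'" using assms by simp
  moreover have "0 < n" using assms by simp
  ultimately have "v (y' / y) = 0" using v_unit_pow[of "y'/y" n] e2 assms by simp
  then show ?thesis using \<open>r = r'\<close> assms by simp
qed

lemma rep_unique:
  assumes "r < n" "r' < n" "y \<noteq> 0" "y' \<noteq> 0"
    and eq: "v (\<pi> ^ r * y ^ n) = v (\<pi> ^ r' * y' ^ n)"
  shows "r = r' \<and> v y = v y'"
  using rep_unique_aux[OF _ _ assms(3,4) eq] rep_unique_aux[OF _ _ assms(4,3) eq[symmetric]] assms
  by (cases "r' \<le> r") auto

end


context vf begin

abbreviation "I m \<equiv> max_ideal_pow v \<pi> m"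
abbreviation "Ov \<equiv> val_ring v"

lemma I_iff: "x \<in> I m \<longleftrightarrow> x = 0 \<or> v (\<pi> ^ m) \<le> v x"
  by (simp add: max_ideal_pow_def)

lemma O_iff: "x \<in> Ov \<longleftrightarrow> x = 0 \<or> 0 \<le> v x"
  by (simp add: val_ring_def)

lemma I_0[simp]: "0 \<in> I m" by (simp add: I_iff)

lemma I_add: assumes "a \<in> I m" "b \<in> I m" shows "a + b \<in> I m"
proof (cases "a = 0 \<or> b = 0 \<or> a + b = 0")
  case True then show ?thesis using assms by auto
next
  case False
  then have "min (v a) (v b) \<le> v (a + b)" using ultra by auto
  moreover have "v (\<pi> ^ m) \<le> v a" "v (\<pi> ^ m) \<le> v b" using assms False by (auto simp: I_iff)
  ultimately show ?thesis by (auto simp: I_iff min_le_iff_disj intro: order_trans)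
qed

lemma I_neg: "a \<in> I m \<Longrightarrow> - a \<in> I m"
  by (auto simp: I_iff)

lemma I_diff: "a \<in> I m \<Longrightarrow> b \<in> I m \<Longrightarrow> a - b \<in> I m"
  using I_add[of a m "-b"] I_neg by simp

lemma I_mult: assumes "a \<in> I m" "c \<in> Ov" shows "c * a \<in> I m"
proof (cases "a = 0 \<or> c = 0")
  case False
  then have "v (\<pi> ^ m) \<le> v a" "0 \<le> v c" using assms by (auto simp: I_iff O_iff)
  then have "v (\<pi> ^ m) \<le> v c + v a" by (metis add_increasing)
  then show ?thesis using False by (simp add: I_iff)
qed auto

lemma O_0[simp]: "0 \<in> Ov" by (simp add: O_iff)

lemma O_mult: "a \<in> Ov \<Longrightarrow> b \<in> Ov \<Longrightarrow> a * b \<in> Ov"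
  by (cases "a = 0 \<or> b = 0") (auto simp: O_iff add_nonneg_nonneg)

lemma O_unit: "v w = 0 \<Longrightarrow> w \<in> Ov" by (simp add: O_iff)
lemma O_1[simp]: "1 \<in> Ov" by (simp add: O_iff)
lemma O_pow: "a \<in> Ov \<Longrightarrow> a ^ n \<in> Ov"
  by (induction n) (auto intro: O_mult)

lemma O_add: assumes "a \<in> Ov" "b \<in> Ov" shows "a + b \<in> Ov"
proof (cases "a = 0 \<or> b = 0 \<or> a + b = 0")
  case True then show ?thesis using assms by auto
next
  case False
  then have "min (v a) (v b) \<le> v (a + b)" using ultra by auto
  moreover have "0 \<le> v a" "0 \<le> v b" using assms False by (auto simp: O_iff)
  ultimately show ?thesis by (auto simp: O_iff min_le_iff_disj intro: order_trans)
qed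


abbreviation "cg m a b \<equiv> cong_pi v \<pi> m a b"

lemma cg_def': "cg m a b \<longleftrightarrow> a - b \<in> I m" by (simp add: cong_pi_def)
lemma cg_refl[simp]: "cg m a a" by (simp add: cg_def')
lemma cg_sym: "cg m a b \<Longrightarrow> cg m b a"
  using I_neg by (fastforce simp: cg_def')
lemma cg_trans: "cg m a b \<Longrightarrow> cg m b c \<Longrightarrow> cg m a c"
  using I_add by (fastforce simp: cg_def')
lemma cg_mult: assumes "cg m a b" "cg m c d" "b \<in> Ov" "c \<in> Ov" shows "cg m (a * c) (b * d)"
proof -
  have "a * c - b * d = c * (a - b) + b * (c - d)" by (simp add: algebra_simps)
  then show ?thesis using assms I_mult I_add by (simp add: cg_def')
qed
lemma cg_pow: assumes "cg m a 1" "a \<in> Ov" shows "cg m (a ^ n) 1"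
proof (induction n)
  case (Suc n) then show ?case using cg_mult[OF assms(1) Suc] assms(2) O_pow[OF assms(2), of n] by simp
qed simp
lemma cg_cancel: assumes "cg m (a * w) (b * w)" "w \<noteq> 0" "v w = 0" shows "cg m a b"
proof -
  have "inverse w * (a * w - b * w) \<in> I m"
    using assms I_mult[of _ m "inverse w"] by (simp add: cg_def' O_iff)
  moreover have "inverse w * (a * w - b * w) = a - b" using assms(2) by (simp add: field_simps)
  ultimately show ?thesis by (simp add: cg_def')
qed

lemma I0_O: "I 0 = Ov" by (auto simp: I_iff O_iff)

lemma M_I1: "x \<in> max_ideal v \<Longrightarrow> x \<in> I 1"
  using unif_le by (auto simp: max_ideal_def I_iff)

end

locale zg = vf +
  assumes zgroup: "\<And>n x. 0 < n \<Longrightarrow> x \<noteq> 0 \<Longrightarrow> \<exists>r<n. \<exists>y. y \<noteq> 0 \<and> v x = v (\<pi> ^ r * y ^ n)"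
    and finres: "finite (residue_field v)"
begin

lemma res_reps: "\<exists>R. finite R \<and> R \<subseteq> Ov \<and> (\<forall>x\<in>Ov. \<exists>r\<in>R. x - r \<in> max_ideal v)"
proof -
  define cls where "cls = (\<lambda>x. {y \<in> Ov. x - y \<in> max_ideal v})"
  have "residue_field v = cls ` Ov" by (simp add: residue_field_def cls_def)
  then obtain R where R: "R \<subseteq> Ov" "finite R" "cls ` Ov = cls ` R"
    using finite_subset_image[of "residue_field v" cls Ov] finres by auto
  have "\<exists>r\<in>R. x - r \<in> max_ideal v" if x: "x \<in> Ov" for x
  proof -
    obtain r where r: "r \<in> R" "cls x = cls r" using R(3) x by (metis imageE image_eqI)
    have "x \<in> cls x" using x by (simp add: cls_def max_ideal_def)
    then have "x \<in> cls r" using r by simp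
    then have "r - x \<in> max_ideal v" by (simp add: cls_def)
    then have "x - r \<in> max_ideal v"
      using vminus[of "r - x"] by (auto simp: max_ideal_def)
    then show ?thesis using r by blast
  qed
  then show ?thesis using R by blast
qed

lemma reps: "\<exists>F. finite F \<and> (\<forall>x\<in>Ov. \<exists>f\<in>F. x - f \<in> I m)"
proof (induction m)
  case 0 then show ?case using I0_O by (intro exI[of _ "{0}"]) auto
next
  case (Suc m)
  then obtain F where F: "finite F" "\<forall>x\<in>Ov. \<exists>f\<in>F. x - f \<in> I m" by blast
  obtain R where R: "finite R" "R \<subseteq> Ov" "\<forall>x\<in>Ov. \<exists>r\<in>R. x - r \<in> max_ideal v"
    using res_reps by blast
  define F' where "F' = (\<lambda>(f, r). f + r * \<pi> ^ m) ` (F \<times> R)"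
  have "finite F'" using F R by (simp add: F'_def)
  moreover have "\<exists>f'\<in>F'. x - f' \<in> I (Suc m)" if x: "x \<in> Ov" for x
  proof -
    obtain f where f: "f \<in> F" "x - f \<in> I m" using F x by blast
    define e where "e = (x - f) / \<pi> ^ m"
    have xe: "x - f = \<pi> ^ m * e" by (simp add: e_def)
    have "e \<in> Ov"
    proof (cases "x - f = 0")
      case False
      then have "v (\<pi> ^ m) \<le> v (x - f)" using f by (simp add: I_iff)
      then show ?thesis using False by (simp add: O_iff e_def)
    qed (simp add: e_def)
    then obtain r where r: "r \<in> R" "e - r \<in> max_ideal v" using R by blast
    then have er: "e - r \<in> I 1" using M_I1 by blast
    have "\<pi> ^ m * (e - r) \<in> I (Suc m)"
    proof (cases "e - r = 0")
      case False
      then have "v \<pi> \<le> v (e - r)" using er by (simp add: I_iff)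
      then have "v (\<pi> ^ m) + v \<pi> \<le> v (\<pi> ^ m) + v (e - r)" by simp
      then show ?thesis using False by (simp add: I_iff add.commute)
    qed simp
    moreover have "x - (f + r * \<pi> ^ m) = \<pi> ^ m * (e - r)" using xe by (simp add: algebra_simps)
    moreover have "f + r * \<pi> ^ m \<in> F'" using f r by (auto simp: F'_def)
    ultimately show ?thesis by metis
  qed
  ultimately show ?case by blast
qed

lemma unit_pow_one: "\<exists>N>0. \<forall>w. w \<noteq> 0 \<longrightarrow> v w = 0 \<longrightarrow> cg m (w ^ N) 1"
proof -
  obtain F where F: "finite F" "\<forall>x\<in>Ov. \<exists>f\<in>F. x - f \<in> I m" using reps by blast
  define C where "C = card F"
  have "cg m (w ^ fact C) 1" if w: "w \<noteq> 0" "v w = 0" for w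
  proof -
    have wO: "w ^ i \<in> Ov" for i using w vpow_zero[of w i] by (simp add: O_iff)
    define g where "g i = (SOME f. f \<in> F \<and> w ^ i - f \<in> I m)" for i
    have g: "g i \<in> F \<and> w ^ i - g i \<in> I m" for i
      unfolding g_def using F(2) wO[of i] by (metis (mono_tags, lifting) someI_ex)
    have "g ` {..C} \<subseteq> F" using g by auto
    then have "card (g ` {..C}) \<le> C" using F(1) card_mono C_def by blast
    then have "\<not> inj_on g {..C}" using pigeonhole[of g "{..C}"] by simp
    then obtain i j where ij: "i \<le> C" "j \<le> C" "i \<noteq> j" "g i = g j"
      unfolding inj_on_def by auto
    obtain a b where ab: "a < b" "b \<le> C" "g a = g b"
      using ij by (metis linorder_neqE)
    have "w ^ b - w ^ a \<in> I m" using g[of a] g[of b] ab I_diff by fastforce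
    moreover have "w ^ b - w ^ a = (w ^ (b - a) - 1) * w ^ a"
      using ab by (simp add: algebra_simps power_add[symmetric])
    ultimately have "cg m (w ^ (b - a) * w ^ a) (1 * w ^ a)"
      by (simp add: cg_def' algebra_simps)
    then have d: "cg m (w ^ (b - a)) 1"
      using cg_cancel[of m "w ^ (b - a)" "w ^ a" 1] w vpow_zero by simp
    have "(b - a) dvd fact C" using ab by (intro dvd_fact) auto
    then obtain e where "fact C = (b - a) * e" by blast
    then have "w ^ fact C = (w ^ (b - a)) ^ e" by (simp add: power_mult)
    then show ?thesis using cg_pow[OF d wO] by simp
  qed
  then show ?thesis by (intro exI[of _ "fact C"]) auto
qed

lemma ac_exists: "\<exists>f. ac_spec v \<pi> m f"
proof -
  obtain N where N: "N > 0" "\<And>w. w \<noteq> 0 \<Longrightarrow> v w = 0 \<Longrightarrow> cg m (w ^ N) 1"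
    using unit_pow_one[of m] by blast
  define rep where "rep x = (SOME p. fst p < N \<and> snd p \<noteq> 0 \<and> v x = v (\<pi> ^ fst p * snd p ^ N))" for x
  define f where "f x = (if x = 0 then 1 else x / (\<pi> ^ fst (rep x) * snd (rep x) ^ N))" for x
  have fp: "\<exists>r<N. \<exists>y. y \<noteq> 0 \<and> x = \<pi> ^ r * y ^ N * f x \<and> f x \<noteq> 0 \<and> v (f x) = 0"
    if x: "x \<noteq> 0" for x
  proof -
    have "\<exists>p. fst p < N \<and> snd p \<noteq> 0 \<and> v x = v (\<pi> ^ fst p * snd p ^ N)"
      using zgroup[OF N(1) x] by auto
    then have r: "fst (rep x) < N \<and> snd (rep x) \<noteq> 0 \<and> v x = v (\<pi> ^ fst (rep x) * snd (rep x) ^ N)"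
      unfolding rep_def by (rule someI_ex)
    show ?thesis
      apply (rule exI[of _ "fst (rep x)"])
      using r x by (auto simp: f_def)
  qed
  have frep: "cg m (f x) u" if x: "x = \<pi> ^ R * y ^ N * u" and yu: "y \<noteq> 0" "u \<noteq> 0" "v u = 0" for x R y u
  proof -
    have xnz: "x \<noteq> 0" using x yu by simp
    define y' where "y' = \<pi> ^ (R div N) * y"
    have "\<pi> ^ R = \<pi> ^ (R mod N) * (\<pi> ^ (R div N)) ^ N"
      by (metis mod_div_mult_eq power_add power_mult mult.commute)
    then have x2: "x = \<pi> ^ (R mod N) * y' ^ N * u" using x by (simp add: y'_def power_mult_distrib)
    obtain r1 y1 where r1: "r1 < N" "y1 \<noteq> 0" "x = \<pi> ^ r1 * y1 ^ N * f x" "f x \<noteq> 0" "v (f x) = 0"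
      using fp[OF xnz] by blast
    have y'nz: "y' \<noteq> 0" using yu by (simp add: y'_def)
    have "v (\<pi> ^ (R mod N) * y' ^ N) = v (\<pi> ^ r1 * y1 ^ N)"
      using x2 r1 yu y'nz vmult[of "\<pi> ^ (R mod N) * y' ^ N" u] vmult[of "\<pi> ^ r1 * y1 ^ N" "f x"]
      by (metis add.right_neutral mult_eq_0_iff pi_nz power_not_zero)
    then have eq: "R mod N = r1" "v y' = v y1"
      using rep_unique[of "R mod N" N r1 y' y1] N r1 y'nz by auto
    have fx: "f x = (y' / y1) ^ N * u"
      using x2 r1 eq y'nz by (simp add: field_simps power_divide)
    have "v (y' / y1) = 0" using eq y'nz r1 by simp
    then have "cg m ((y' / y1) ^ N) 1" using N(2) y'nz r1 by simp
    then have "cg m ((y' / y1) ^ N * u) (1 * u)"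
      using cg_mult[of m _ 1 u u] yu by (simp add: O_unit)
    then show ?thesis using fx by simp
  qed
  have "ac_spec v \<pi> m f"
    unfolding ac_spec_def
  proof (intro conjI allI impI)
    fix x :: 'a assume "x \<noteq> 0" then show "f x \<noteq> 0" "v (f x) = 0" using fp by blast+
  next
    fix x y :: 'a assume xy: "x \<noteq> 0" "y \<noteq> 0"
    obtain r1 y1 where r1: "y1 \<noteq> 0" "x = \<pi> ^ r1 * y1 ^ N * f x" "f x \<noteq> 0" "v (f x) = 0"
      using fp[OF xy(1)] by blast
    obtain r2 y2 where r2: "y2 \<noteq> 0" "y = \<pi> ^ r2 * y2 ^ N * f y" "f y \<noteq> 0" "v (f y) = 0"
      using fp[OF xy(2)] by blast
    have "x * y = \<pi> ^ (r1 + r2) * (y1 * y2) ^ N * (f x * f y)"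
      by (subst r1(2), subst r2(2)) (simp add: power_add power_mult_distrib algebra_simps)
    then show "cg m (f (x * y)) (f x * f y)"
      using frep[of "x*y" "r1 + r2" "y1*y2" "f x * f y"] r1 r2 by simp
  next
    show "cg m (f \<pi>) 1" using frep[of \<pi> 1 1 1] by simp
  next
    fix u assume "u \<noteq> 0" "v u = 0"
    then show "cg m (f u) u" using frep[of u 0 1 u] by simp
  qed
  then show ?thesis by blast
qed

lemma ac_spec: "ac_spec v \<pi> m (ac v \<pi> m)"
  unfolding ac_def using ac_exists by (rule someI_ex)

end


context zg begin

lemma Q_order: assumes "x \<in> Q_set v \<pi> n m" "0 < m"
  shows "x \<noteq> 0 \<and> (\<exists>y. y \<noteq> 0 \<and> v x = v (y ^ n))"
proof -
  obtain y z where yz: "x \<noteq> 0" "y \<noteq> 0" "z \<in> I m" "x = y ^ n * (1 + z)"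
    using assms by (auto simp: Q_set_def)
  have "v (1 + z) = 0"
  proof (cases "z = 0")
    case False
    then have "v (\<pi> ^ m) \<le> v z" using yz by (simp add: I_iff)
    moreover have "0 < v (\<pi> ^ m)" using vpi_pow_pos assms by simp
    ultimately have "v 1 < v z" by simp
    then show ?thesis using vstrict[of 1 z] False by simp
  qed simp
  moreover have "1 + z \<noteq> 0" using yz by auto
  ultimately show ?thesis using yz by (intro conjI exI[of _ y]) auto
qed

lemma Q_exists: assumes "y \<noteq> 0" shows "\<exists>x \<in> Q_set v \<pi> n m. v x = v (y ^ n)"
proof -
  define f where "f = ac v \<pi> m"
  have sp: "ac_spec v \<pi> m f" using ac_spec f_def by simp
  have f1: "\<And>x. x \<noteq> 0 \<Longrightarrow> f x \<noteq> 0 \<and> v (f x) = 0"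
   and f2: "\<And>x y. x \<noteq> 0 \<Longrightarrow> y \<noteq> 0 \<Longrightarrow> cg m (f (x * y)) (f x * f y)"
   and f4: "\<And>u. u \<noteq> 0 \<Longrightarrow> v u = 0 \<Longrightarrow> cg m (f u) u"
    using sp unfolding ac_spec_def by blast+
  define w where "w = f y"
  have w: "w \<noteq> 0" "v w = 0" using f1 assms w_def by auto
  define y' where "y' = y / w"
  have y'nz: "y' \<noteq> 0" using assms w by (simp add: y'_def)
  have fy': "f y' \<noteq> 0" "v (f y') = 0" using f1 y'nz by auto
  have "cg m (f (y' * w)) (f y' * f w)" using f2 y'nz w by simp
  moreover have "y' * w = y" using w by (simp add: y'_def)
  moreover have "cg m (f y' * f w) (f y' * w)"
    using cg_mult[of m "f y'" "f y'" "f w" w] f4[OF w] fy' f1[OF w(1)] by (simp add: O_unit)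
  ultimately have "cg m (1 * w) (f y' * w)" using w_def cg_trans by fastforce
  then have "cg m 1 (f y')" using cg_cancel w by blast
  then have c1: "cg m (f y') 1" by (rule cg_sym)
  have cj: "cg m (f (y' ^ j)) 1" for j
  proof (induction j)
    case 0 then show ?case using f4[of 1] by simp
  next
    case (Suc j)
    have "cg m (f (y' * y' ^ j)) (f y' * f (y' ^ j))" using f2 y'nz by simp
    moreover have "cg m (f y' * f (y' ^ j)) (1 * 1)"
      using cg_mult[OF c1 Suc] f1[of "y' ^ j"] y'nz by (simp add: O_unit)
    ultimately show ?case using cg_trans by fastforce
  qed
  have "y' ^ n \<noteq> 0" "y' ^ n = y' ^ n * (1 + 0)" using y'nz by simp_all
  then have "y' ^ n \<in> Q_set v \<pi> n m"
    unfolding Q_set_def using y'nz cj[of n] f_def I_0[of m] by blast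
  moreover have "v (y' ^ n) = v (y ^ n)"
    using w assms vpow_zero[of w n] by (simp add: y'_def power_divide)
  ultimately show ?thesis by blast
qed

lemma lamQ_order: assumes "s \<in> lamQ v \<pi> lam n m" "0 < m" "lam \<noteq> 0"
  shows "s \<noteq> 0 \<and> (\<exists>y. y \<noteq> 0 \<and> v s = v (lam * y ^ n))"
  using assms Q_order by (fastforce simp: lamQ_def)

lemma lamQ_exists: assumes "y \<noteq> 0" shows "\<exists>s \<in> lamQ v \<pi> lam n m. v s = v (lam * y ^ n) \<and> (lam \<noteq> 0 \<longrightarrow> s \<noteq> 0)"
proof -
  obtain x where x: "x \<in> Q_set v \<pi> n m" "v x = v (y ^ n)" using Q_exists assms by blast
  have "x \<noteq> 0" using x by (simp add: Q_set_def)
  moreover have "lam * x \<in> lamQ v \<pi> lam n m" using x(1) unfolding lamQ_def by (rule imageI)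
  ultimately show ?thesis using x assms by (cases "lam = 0") (auto intro!: bexI[of _ "lam * x"])
qed

lemma lamQ_zero: "lamQ v \<pi> 0 n m = {0}"
  using Q_exists[of 1] by (auto simp: lamQ_def)

lemma unb_above: assumes "a \<noteq> 0" "0 < n" shows "\<exists>y. y \<noteq> 0 \<and> v a < v (y ^ n)"
proof (cases "v a < 0")
  case True then show ?thesis by (intro exI[of _ 1]) simp
next
  case False
  then have "0 \<le> v a" by simp
  moreover have "0 < v \<pi>" by (rule vpi_pos)
  ultimately have pos: "0 < v (\<pi> * a)" "v a < v (\<pi> * a)" using assms by (simp_all add: add_pos_nonneg)
  have h: "v (\<pi> * a) \<le> v ((\<pi> * a) ^ n)" using vpow_ge[of "\<pi> * a" n] pos assms by simp
  have "v a < v ((\<pi> * a) ^ n)" using less_le_trans[OF pos(2) h] .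
  then show ?thesis using pos assms by (intro exI[of _ "\<pi> * a"]) simp
qed

lemma unb_below: assumes "a \<noteq> 0" "0 < n" shows "\<exists>y. y \<noteq> 0 \<and> v (y ^ n) < v a"
proof -
  obtain y where y: "y \<noteq> 0" "v (inverse a) < v (y ^ n)" using unb_above[of "inverse a" n] assms by auto
  then show ?thesis using assms by (intro exI[of _ "inverse y"]) (simp add: power_inverse minus_less_iff)
qed

end


context zg begin

lemma L_nonneg: assumes "u \<noteq> 0" "d \<le> n" "0 < v (\<pi> ^ d) + v (u ^ n)" shows "0 \<le> v (u ^ n)"
proof (rule ccontr)
  assume "\<not> 0 \<le> v (u ^ n)"
  then have "v u < 0" using vpow_nonneg[of u n] assms by (metis not_le)
  then have "v u \<le> v (inverse \<pi>)" using unif_le_neg assms by simp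
  then have "v (u ^ n) \<le> v (inverse \<pi> ^ n)" using vpow_mono[of u "inverse \<pi>" n] assms by simp
  also have "\<dots> = - v (\<pi> ^ n)" by (simp add: power_inverse)
  finally have a: "v (u ^ n) \<le> - v (\<pi> ^ n)" .
  have b: "v (\<pi> ^ d) \<le> v (\<pi> ^ n)" using vpi_pow_mono[of d n] assms by (cases "d = n") auto
  have "v (\<pi> ^ d) + v (u ^ n) \<le> v (\<pi> ^ n) + - v (\<pi> ^ n)" using add_mono[OF b a] .
  then show False using assms by simp
qed

lemma main_claim:
  assumes n: "0 < n" and m: "0 < m" and lam: "lam \<noteq> 0" and r: "r < n" "y0 \<noteq> 0" "v lam = v (\<pi> ^ r * y0 ^ n)"
    and l: "l < n" and A: "A \<noteq> 0" "y1 \<noteq> 0" "v A = v (\<pi> ^ l * y1 ^ n)"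
  shows "(\<exists>s\<in>lamQ v \<pi> lam n m. ord_less v A s \<and> ord_less v s B)
         \<longleftrightarrow> ord_less v A (\<pi> powi (- int (if l < r then r - l else r + n - l)) * B)"
proof -
  define d where "d = (if l < r then r - l else r + n - l)"
  define j where "j = (if l < r then 0 else 1::nat)"
  have dj: "l + d = r + n * j" "0 < d" "d \<le> n" using r l by (auto simp: d_def j_def)
  have pd: "0 < v (\<pi> ^ d)" using vpi_pow_pos dj by simp
  define E where "E = A * \<pi> ^ d"
  have Enz: "E \<noteq> 0" using A by (simp add: E_def)
  have "\<pi> ^ l * y1 ^ n * \<pi> ^ d = \<pi> ^ r * (\<pi> ^ j * y1) ^ n"
    using dj(1) by (simp add: power_add[symmetric] power_mult_distrib power_mult[symmetric] algebra_simps)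
  have vEA: "v E = v A + v (\<pi> ^ d)" using A by (simp add: E_def)
  have "v (\<pi> ^ l * y1 ^ n * \<pi> ^ d) = v (\<pi> ^ l * y1 ^ n) + v (\<pi> ^ d)"
    using A by (intro vmult) auto
  then have vE: "v E = v (\<pi> ^ r * (\<pi> ^ j * y1) ^ n)"
    using vEA A \<open>\<pi> ^ l * y1 ^ n * \<pi> ^ d = _\<close> by metis
  have key: "v (lam * z ^ n) = v E + v ((y0 * z / (\<pi> ^ j * y1)) ^ n)" if z: "z \<noteq> 0" for z
  proof -
    have "lam * z ^ n \<noteq> 0" using lam z by simp
    have "v (lam * z ^ n) = v (\<pi> ^ r * y0 ^ n) + v (z ^ n)" using lam z r by simp
    also have "\<dots> = v (\<pi> ^ r * (y0 * z) ^ n)" using r z by (simp add: power_mult_distrib add.assoc)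
    also have "\<pi> ^ r * (y0 * z) ^ n = \<pi> ^ r * (\<pi> ^ j * y1) ^ n * (y0 * z / (\<pi> ^ j * y1)) ^ n"
      using A by (simp add: power_divide field_simps)
    also have "v \<dots> = v (\<pi> ^ r * (\<pi> ^ j * y1) ^ n) + v ((y0 * z / (\<pi> ^ j * y1)) ^ n)"
      using A r z by simp
    finally show ?thesis using vE by simp
  qed
  let ?B' = "\<pi> powi (- int d) * B"
  have B': "?B' = B / \<pi> ^ d" by (simp add: power_int_minus divide_inverse mult.commute)
  show ?thesis unfolding d_def[symmetric]
  proof
    assume "\<exists>s\<in>lamQ v \<pi> lam n m. ord_less v A s \<and> ord_less v s B"
    then obtain s where s: "s \<in> lamQ v \<pi> lam n m" "ord_less v A s" "ord_less v s B" by blast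
    obtain z where z: "s \<noteq> 0" "z \<noteq> 0" "v s = v (lam * z ^ n)" using lamQ_order[OF s(1) m lam] by blast
    define u where "u = y0 * z / (\<pi> ^ j * y1)"
    have unz: "u \<noteq> 0" using z r A by (simp add: u_def)
    have vs: "v s = v A + v (\<pi> ^ d) + v (u ^ n)" using key[OF z(2)] z vEA by (simp add: u_def)
    have "v A < v s" using s(2) z by (simp add: ord_less_def)
    then have "0 < v (\<pi> ^ d) + v (u ^ n)" using vs by (simp add: add.assoc)
    then have "0 \<le> v (u ^ n)" using L_nonneg unz dj by blast
    then have le: "v A + v (\<pi> ^ d) \<le> v s" using vs by (simp add: add_increasing2)
    show "ord_less v A ?B'"
    proof (cases "B = 0")
      case True then show ?thesis using A by (simp add: ord_less_def)
    next
      case False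
      then have "v s < v B" using s(3) by (simp add: ord_less_def)
      then have "v A + v (\<pi> ^ d) < v B" using le by simp
      then have "v A < v B - v (\<pi> ^ d)" by (simp add: less_diff_eq)
      then show ?thesis using A False B' by (simp add: ord_less_def)
    qed
  next
    assume h: "ord_less v A ?B'"
    define z where "z = \<pi> ^ j * y1 / y0"
    have znz: "z \<noteq> 0" using A r by (simp add: z_def)
    have "y0 * z / (\<pi> ^ j * y1) = 1" using A r by (simp add: z_def)
    then have vz: "v (lam * z ^ n) = v E" using key[OF znz] by simp
    obtain s where s: "s \<in> lamQ v \<pi> lam n m" "v s = v (lam * z ^ n)" "s \<noteq> 0"
      using lamQ_exists[OF znz, of lam n m] lam by blast
    have vs: "v s = v A + v (\<pi> ^ d)" using s vz vEA by simp
    have "v A < v A + v (\<pi> ^ d)" using pd by simp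
    then have "ord_less v A s" using A(1) s(3) vs unfolding ord_less_def by simp
    moreover have "ord_less v s B"
    proof (cases "B = 0")
      case True then show ?thesis using s by (simp add: ord_less_def)
    next
      case False
      then have "v A < v B - v (\<pi> ^ d)" using h B' by (simp add: ord_less_def)
      then show ?thesis using s vs False by (simp add: ord_less_def less_diff_eq)
    qed
    ultimately show "\<exists>s\<in>lamQ v \<pi> lam n m. ord_less v A s \<and> ord_less v s B" using s by blast
  qed
qed

end


lemma bool_comb_sub: "S \<in> bool_comb U A \<Longrightarrow> (\<forall>X\<in>A. X \<subseteq> U) \<Longrightarrow> S \<subseteq> U"
  by (induction rule: bool_comb.induct) auto

lemma precell_sub: "precell v \<pi> Rs Fs \<Delta> k S \<Longrightarrow> S \<subseteq> {x. length x = k}"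
  unfolding precell_def
  by (erule bool_comb_sub) (auto simp: precell_atoms_def)

lemma precell_inter: "precell v \<pi> Rs Fs \<Delta> k S \<Longrightarrow> precell v \<pi> Rs Fs \<Delta> k T \<Longrightarrow> precell v \<pi> Rs Fs \<Delta> k (S \<inter> T)"
  unfolding precell_def by (rule bool_comb.inter)

lemma precell_top: "precell v \<pi> Rs Fs \<Delta> k {x. length x = k}"
  unfolding precell_def by (rule bool_comb.top)

lemma precell_ord: "a1 \<in> \<Delta> k \<Longrightarrow> a2 \<in> \<Delta> k \<Longrightarrow>
   precell v \<pi> Rs Fs \<Delta> k {x. length x = k \<and> ord_less v (a1 x) (\<pi> powi l * a2 x)}"
  unfolding precell_def by (rule bool_comb.atom) (auto simp: precell_atoms_def)

lemma fpp_single: "precell v \<pi> Rs Fs \<Delta> k S \<Longrightarrow> finite_precell_partition v \<pi> Rs Fs \<Delta> k S"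
  unfolding finite_precell_partition_def by (intro exI[of _ "{S}"]) auto

lemma fpp_empty: "finite_precell_partition v \<pi> Rs Fs \<Delta> k {}"
  unfolding finite_precell_partition_def by (intro exI[of _ "{}"]) auto

theorem lemma2p2:
  fixes v :: "'a::field \<Rightarrow> 'g::linordered_ab_group_add"
    and \<pi> :: 'a and q :: nat
    and Rs :: "('a list \<Rightarrow> bool) set" and Fs :: "('a list \<Rightarrow> 'a) set"
    and \<Delta> :: "nat \<Rightarrow> ('a list \<Rightarrow> 'a) set"
    and k n m :: nat and D :: "'a list set"
    and a1 a2 c :: "'a list \<Rightarrow> 'a" and box1 box2 :: bool and lam :: 'a
  assumes K: "FqZ_field q v \<pi>"
    and L: "expands_base v \<pi> Rs"
    and Delta: "\<forall>j. \<forall>f\<in>\<Delta> j. order_definable v Rs Fs j f"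
    and D: "precell v \<pi> Rs Fs \<Delta> k D"
    and a1: "a1 \<in> \<Delta> k" and a2: "a2 \<in> \<Delta> k"
    and c: "qf_def_fun Rs Fs k c"
    and nm: "0 < n" "0 < m"
    and hyp: "\<forall>l::nat. finite_precell_partition v \<pi> Rs Fs \<Delta> k
               {x. length x = k \<and> a1 x \<noteq> 0 \<and> (\<exists>y. y \<noteq> 0 \<and> v (a1 x) = v (\<pi> ^ l * y ^ n))}"
  shows "finite_precell_partition v \<pi> Rs Fs \<Delta> k
           {x. length x = k \<and> (\<exists>t. x @ [t] \<in> cell_set v \<pi> k D a1 box1 c box2 a2 lam n m)}"
proof -
  interpret Z: zg v \<pi>
    using K unfolding FqZ_field_def zg_def vf_def zg_axioms_def by auto
  define U where "U = {x::'a list. length x = k}"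
  have DU: "D \<subseteq> U" using precell_sub[OF D] U_def by simp
  define Q where "Q = lamQ v \<pi> lam n m"
  define \<Phi> where "\<Phi> x = (\<exists>s\<in>Q. (box1 \<longrightarrow> ord_less v (a1 x) s) \<and> (box2 \<longrightarrow> ord_less v s (a2 x)))" for x
  define Proj where "Proj = {x. length x = k \<and> (\<exists>t. x @ [t] \<in> cell_set v \<pi> k D a1 box1 c box2 a2 lam n m)}"
  have proj_eq: "Proj = {x \<in> D. \<Phi> x}"
  proof (intro set_eqI iffI)
    fix x assume "x \<in> Proj"
    then obtain t where "length x = k" "x \<in> D" "box1 \<longrightarrow> ord_less v (a1 x) (t - c x)"
      "box2 \<longrightarrow> ord_less v (t - c x) (a2 x)" "t - c x \<in> Q"
      by (auto simp: Proj_def cell_set_def Q_def)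
    then show "x \<in> {x \<in> D. \<Phi> x}" unfolding \<Phi>_def by blast
  next
    fix x assume "x \<in> {x \<in> D. \<Phi> x}"
    then obtain s where s: "x \<in> D" "s \<in> Q" "box1 \<longrightarrow> ord_less v (a1 x) s" "box2 \<longrightarrow> ord_less v s (a2 x)"
      unfolding \<Phi>_def by blast
    then have "x @ [s + c x] \<in> cell_set v \<pi> k D a1 box1 c box2 a2 lam n m"
      using DU unfolding cell_set_def Q_def U_def by auto
    then show "x \<in> Proj" using s DU by (auto simp: Proj_def U_def)
  qed
  define A1 where "A1 = {x. length x = k \<and> ord_less v (a1 x) (\<pi> powi 1 * a1 x)}"
  have A1p: "precell v \<pi> Rs Fs \<Delta> k A1" unfolding A1_def by (rule precell_ord[of a1 \<Delta> k a1, OF a1 a1])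
  have A1_iff: "x \<in> A1 \<longleftrightarrow> length x = k \<and> a1 x \<noteq> 0" for x
  proof -
    have "a1 x \<noteq> 0 \<Longrightarrow> v (a1 x) < v \<pi> + v (a1 x)" using Z.vpi_pos by simp
    then show ?thesis by (auto simp: A1_def ord_less_def)
  qed
  have viaX: "finite_precell_partition v \<pi> Rs Fs \<Delta> k Proj"
    if "precell v \<pi> Rs Fs \<Delta> k X" "\<And>x. x \<in> D \<Longrightarrow> \<Phi> x \<longleftrightarrow> x \<in> X" for X
  proof -
    have "Proj = D \<inter> X" using proj_eq that by auto
    then show ?thesis using fpp_single precell_inter[OF D that(1)] by simp
  qed
  have "finite_precell_partition v \<pi> Rs Fs \<Delta> k Proj"
  proof (cases "lam = 0")
    case True
    then have Q0: "Q = {0}" using Z.lamQ_zero Q_def by simp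
    show ?thesis
    proof (cases box2)
      case True
      then have "Proj = {}" using proj_eq Q0 by (auto simp: \<Phi>_def ord_less_def)
      then show ?thesis using fpp_empty by simp
    next
      case False
      show ?thesis
      proof (cases box1)
        case True
        show ?thesis
          by (rule viaX[OF A1p]) (use DU \<open>\<not> box2\<close> True Q0 A1_iff in \<open>auto simp: \<Phi>_def ord_less_def U_def\<close>)
      next
        case False
        show ?thesis
          by (rule viaX[OF precell_top]) (use DU \<open>\<not> box2\<close> False Q0 in \<open>auto simp: \<Phi>_def U_def\<close>)
      qed
    qed
  next
    case lam: False
    have ex_any: "\<exists>s\<in>Q. True" using Z.lamQ_exists[of 1 lam n m] Q_def by auto
    have ex_above: "\<exists>s\<in>Q. ord_less v a s" if anz: "a \<noteq> 0" for a
    proof -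
      obtain y where y: "y \<noteq> 0" "v (a / lam) < v (y ^ n)" using Z.unb_above[of "a / lam" n] anz lam nm by auto
      obtain s where s: "s \<in> Q" "v s = v (lam * y ^ n)" "s \<noteq> 0"
        using Z.lamQ_exists[OF y(1), of lam n m] lam Q_def by auto
      have "v a < v s" using y s lam anz by (simp add: diff_less_eq add.commute)
      then have "ord_less v a s" using anz by (simp add: ord_less_def)
      then show ?thesis using s(1) by blast
    qed
    have ex_below: "\<exists>s\<in>Q. ord_less v s a" for a
    proof (cases "a = 0")
      case True
      obtain s where s: "s \<in> Q" "v s = v (lam * 1 ^ n)" "s \<noteq> 0"
        using Z.lamQ_exists[of 1 lam n m] lam Q_def by auto
      then show ?thesis using True by (auto simp: ord_less_def)
    next
      case False
      obtain y where y: "y \<noteq> 0" "v (y ^ n) < v (a / lam)" using Z.unb_below[of "a / lam" n] False lam nm by auto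
      obtain s where s: "s \<in> Q" "v s = v (lam * y ^ n)" "s \<noteq> 0"
        using Z.lamQ_exists[OF y(1), of lam n m] lam Q_def by auto
      have "v s < v a" using y s lam False by (simp add: less_diff_eq add.commute)
      then have "ord_less v s a" using s(3) by (simp add: ord_less_def)
      then show ?thesis using s(1) by blast
    qed
    show ?thesis
    proof (cases "box1 \<and> box2")
      case False
      show ?thesis
      proof (cases box1)
        case True
        then have nb2: "\<not> box2" using False by simp
        show ?thesis
        proof (rule viaX[OF A1p])
          fix x assume "x \<in> D"
          then show "\<Phi> x \<longleftrightarrow> x \<in> A1"
            using ex_above[of "a1 x"] True nb2 A1_iff DU unfolding \<Phi>_def U_def
            by (auto simp: ord_less_def)
        qed
      next
        case nb1: False
        show ?thesis
        proof (rule viaX[OF precell_top])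
          fix x assume "x \<in> D"
          then show "\<Phi> x \<longleftrightarrow> x \<in> {x. length x = k}"
            using ex_below[of "a2 x"] ex_any nb1 DU unfolding \<Phi>_def U_def
            by auto
        qed
      qed
    next
      case True
      then have b12: box1 box2 by auto
      obtain r y0 where r: "r < n" "y0 \<noteq> 0" "v lam = v (\<pi> ^ r * y0 ^ n)"
        using Z.zgroup[OF nm(1) lam] by blast
      define S where "S l = {x. length x = k \<and> a1 x \<noteq> 0 \<and> (\<exists>y. y \<noteq> 0 \<and> v (a1 x) = v (\<pi> ^ l * y ^ n))}" for l :: nat
      have "\<forall>l. \<exists>Ps. finite Ps \<and> (\<forall>P\<in>Ps. precell v \<pi> Rs Fs \<Delta> k P) \<and> pairwise disjnt Ps \<and> \<Union> Ps = S l"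
        using hyp unfolding finite_precell_partition_def S_def by blast
      then obtain PS where PS: "\<And>l. finite (PS l)" "\<And>l P. P \<in> PS l \<Longrightarrow> precell v \<pi> Rs Fs \<Delta> k P"
        "\<And>l. pairwise disjnt (PS l)" "\<And>l. \<Union> (PS l) = S l"
        by metis
      define d where "d l = (if l < r then r - l else r + n - l)" for l :: nat
      define B where "B l = {x. length x = k \<and> ord_less v (a1 x) (\<pi> powi (- int (d l)) * a2 x)}" for l
      define W where "W l = D \<inter> B l" for l
      have Wp: "precell v \<pi> Rs Fs \<Delta> k (W l)" for l
        unfolding W_def B_def by (rule precell_inter[OF D precell_ord[of a1 \<Delta> k a2, OF a1 a2]])
      have S_disj: "S l \<inter> S l' = {}" if "l < n" "l' < n" "l \<noteq> l'" for l l'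
      proof -
        have False if "x \<in> S l" "x \<in> S l'" for x
        proof -
          obtain y y' where "y \<noteq> 0" "y' \<noteq> 0" "v (a1 x) = v (\<pi> ^ l * y ^ n)" "v (a1 x) = v (\<pi> ^ l' * y' ^ n)"
            using \<open>x \<in> S l\<close> \<open>x \<in> S l'\<close> by (auto simp: S_def)
          then show False using Z.rep_unique[of l n l' y y'] \<open>l < n\<close> \<open>l' < n\<close> \<open>l \<noteq> l'\<close> by auto
        qed
        then show ?thesis by blast
      qed
      have claim: "\<Phi> x \<longleftrightarrow> x \<in> B l" if xS: "x \<in> S l" and ln: "l < n" for x l
      proof -
        obtain y1 where y1: "a1 x \<noteq> 0" "y1 \<noteq> 0" "v (a1 x) = v (\<pi> ^ l * y1 ^ n)" "length x = k"
          using xS by (auto simp: S_def)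
        have "\<Phi> x \<longleftrightarrow> (\<exists>s\<in>lamQ v \<pi> lam n m. ord_less v (a1 x) s \<and> ord_less v s (a2 x))"
          using b12 by (simp add: \<Phi>_def Q_def)
        also have "\<dots> \<longleftrightarrow> ord_less v (a1 x) (\<pi> powi (- int (d l)) * a2 x)"
          unfolding d_def by (rule Z.main_claim[OF nm lam r ln y1(1-3)])
        finally show ?thesis using y1 by (simp add: B_def)
      qed
      have Phi_S: "\<exists>l<n. x \<in> S l" if Px: "\<Phi> x" and lx: "length x = k" for x
      proof -
        have "a1 x \<noteq> 0" using Px b12 by (auto simp: \<Phi>_def ord_less_def)
        then obtain l y where "l < n" "y \<noteq> 0" "v (a1 x) = v (\<pi> ^ l * y ^ n)"
          using Z.zgroup[OF nm(1)] by blast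
        then have "x \<in> S l" using lx \<open>a1 x \<noteq> 0\<close> unfolding S_def by blast
        then show ?thesis using \<open>l < n\<close> by blast
      qed
      define Ps where "Ps = (\<Union>l\<in>{..<n}. (\<lambda>P. P \<inter> W l) ` PS l)"
      have "finite Ps" using PS(1) by (simp add: Ps_def)
      moreover have "\<forall>X\<in>Ps. precell v \<pi> Rs Fs \<Delta> k X"
        using PS(2) Wp by (auto simp: Ps_def intro!: precell_inter)
      moreover have "pairwise disjnt Ps"
      proof (rule pairwiseI)
        fix X Y assume XY: "X \<in> Ps" "Y \<in> Ps" "X \<noteq> Y"
        then obtain l P l' P' where lp: "l < n" "P \<in> PS l" "X = P \<inter> W l" "l' < n" "P' \<in> PS l'" "Y = P' \<inter> W l'"
          by (auto simp: Ps_def)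
        show "disjnt X Y"
        proof (cases "l = l'")
          case True
          then have "P \<noteq> P'" using lp XY by auto
          then have "disjnt P P'" using PS(3)[of l] lp True by (auto simp: pairwise_def)
          then show ?thesis using lp by (auto simp: disjnt_def)
        next
          case False
          have "P \<subseteq> S l" "P' \<subseteq> S l'" using PS(4) lp by blast+
          then show ?thesis using S_disj[OF lp(1) lp(4) False] lp by (auto simp: disjnt_def)
        qed
      qed
      moreover have "\<Union> Ps = Proj"
      proof -
        have "\<Union> Ps = (\<Union>l\<in>{..<n}. S l \<inter> W l)" by (auto simp: Ps_def simp flip: PS(4))
        also have "\<dots> = Proj"
        proof (intro set_eqI iffI)
          fix x assume "x \<in> (\<Union>l\<in>{..<n}. S l \<inter> W l)"
          then obtain l where "l < n" "x \<in> S l" "x \<in> D" "x \<in> B l" by (auto simp: W_def)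
          then show "x \<in> Proj" using claim proj_eq by auto
        next
          fix x assume "x \<in> Proj"
          then have x: "x \<in> D" "\<Phi> x" using proj_eq by auto
          then have "length x = k" using DU by (auto simp: U_def)
          then obtain l where "l < n" "x \<in> S l" using Phi_S x by blast
          then show "x \<in> (\<Union>l\<in>{..<n}. S l \<inter> W l)" using claim x by (auto simp: W_def)
        qed
        finally show ?thesis .
      qed
      ultimately show ?thesis unfolding finite_precell_partition_def by blast
    qed
  qed
  then show ?thesis by (simp add: Proj_def)
qed


end
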